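(* Let $\Omega\subset\mathbb{R}^N$ be a domain with $0\in\partial\Omega$, and suppose there are $\rho,h>0$ and a $C^1$ function $\phi:\bar B_\rho(0)\subset\mathbb{R}^{N-1}\to(-h,h)$ with $\phi(0)=0$, $\nabla\phi(0)=0$, such that for $\mathcal{C}=B_\rho(0)\times(-h,h)$: $\mathcal{C}\cap\Omega=\{(x',x_N)\in\mathcal{C}:x_N<\phi(x')\}$ and $\mathcal{C}\cap\partial\Omega=\{(x',x_N)\in\mathcal{C}:x_N=\phi(x')\}$. Let $r>0$ and suppose that either (i) $\Omega$ satisfies condition $(\mathrm{L}_r)$, or (ii) $\nabla\phi$ is Lipschitz continuous with Lipschitz constant at most $\frac1r$. Then $$|\phi(x')|\le\frac{\max_{\bar B_{|x'|}(0)}|\nabla\phi|^2+1}{2r}|x'|^2\qquad\text{for all }x'\in B_\rho(0).$$ Consequently, in both cases, setting $\delta_0=\min\Big\{\frac{r}{\max_{\bar B_\rho(0)}|\nabla\phi|^2+1},\rho,\frac h2\Big\}$, one has $B_{\delta_0}((0,-\delta_0))\subset\Omega$ and $B_{\delta_0}((0,\delta_0))\subset\mathbb{R}^N\setminus\bar\Omega$ (two-sided supporting balls of radius $\delta_0$ at $0$).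
   Context: A domain is an open connected set; balls are open Euclidean balls; points of $\mathbb{R}^N$ are written $(x',x_N)$ with $x'\in\mathbb{R}^{N-1}$. $C^1$ regularity of $\partial\Omega$: for every $x_0\in\partial\Omega$ there exist $\rho,h>0$, a rigid map $T$ (rotation composed with translation) with $T(x_0)=0$, and a $C^1$ function $\phi:\bar B_\rho(0)\to(-h,h)$, $\phi(0)=0$, $\nabla\phi(0)=0$, with $\mathcal{C}\cap T(\Omega)=\{x_N<\phi(x')\}$ and $\mathcal{C}\cap T(\partial\Omega)=\{x_N=\phi(x')\}$ in $\mathcal{C}=B_\rho(0)\times(-h,h)$; then the outward unit normal $\vec n$ on $\partial\Omega$ is well defined. Condition $(\mathrm{L}_r)$: $\partial\Omega$ is $C^1$ regular and $|\vec n(x_0)-\vec n(y_0)|\le\frac1r|x_0-y_0|$ for all $x_0,y_0\in\partial\Omega$. *)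

theory Defs
  imports "HOL-Analysis.Analysis"
begin

text \<open>Points of R^N are pairs (x', x_N) with x' :: 'a (a Euclidean space, playing R^(N-1))
  and x_N :: real.  The product carries the Euclidean inner product and norm.\<close>

definition C1_on_cball :: "real \<Rightarrow> ('a::euclidean_space \<Rightarrow> real) \<Rightarrow> ('a \<Rightarrow> 'a) \<Rightarrow> bool" where
  "C1_on_cball \<rho> \<phi> D\<phi> \<longleftrightarrow>
     (\<forall>x\<in>cball 0 \<rho>. (\<phi> has_derivative (\<lambda>v. D\<phi> x \<bullet> v)) (at x within cball 0 \<rho>))
     \<and> continuous_on (cball 0 \<rho>) D\<phi>"

definition graph_chart :: "('a::euclidean_space \<times> real) set \<Rightarrow> real \<Rightarrow> real \<Rightarrow> ('a \<Rightarrow> real) \<Rightarrow> ('a \<Rightarrow> 'a) \<Rightarrow> bool" where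
  "graph_chart U \<rho> h \<phi> D\<phi> \<longleftrightarrow>
     \<rho> > 0 \<and> h > 0 \<and> C1_on_cball \<rho> \<phi> D\<phi> \<and> \<phi> 0 = 0 \<and> D\<phi> 0 = 0
     \<and> \<phi> ` cball 0 \<rho> \<subseteq> {-h<..<h}
     \<and> (ball 0 \<rho> \<times> {-h<..<h}) \<inter> U = {(x', t). x' \<in> ball 0 \<rho> \<and> -h < t \<and> t < h \<and> t < \<phi> x'}
     \<and> (ball 0 \<rho> \<times> {-h<..<h}) \<inter> frontier U = {(x', t). x' \<in> ball 0 \<rho> \<and> -h < t \<and> t < h \<and> t = \<phi> x'}"

definition boundary_chart :: "('a::euclidean_space \<times> real) set \<Rightarrow> ('a \<times> real) \<Rightarrow> (('a \<times> real) \<Rightarrow> ('a \<times> real)) \<Rightarrow> ('a \<times> real) \<Rightarrow> bool" where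
  "boundary_chart \<Omega> x0 Q b \<longleftrightarrow>
     orthogonal_transformation Q \<and> Q x0 + b = 0
     \<and> (\<exists>\<rho> h \<phi> D\<phi>. graph_chart ((\<lambda>x. Q x + b) ` \<Omega>) \<rho> h \<phi> D\<phi>)"

definition C1_boundary :: "('a::euclidean_space \<times> real) set \<Rightarrow> bool" where
  "C1_boundary \<Omega> \<longleftrightarrow> (\<forall>x0\<in>frontier \<Omega>. \<exists>Q b. boundary_chart \<Omega> x0 Q b)"

text \<open>nu is the outward unit normal at x0: in a chart (where the gradient at 0 vanishes)
  the outward normal is e_N = (0,1), pulled back by the rotation Q.\<close>
definition outward_normal :: "('a::euclidean_space \<times> real) set \<Rightarrow> ('a \<times> real) \<Rightarrow> ('a \<times> real) \<Rightarrow> bool" where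
  "outward_normal \<Omega> x0 \<nu> \<longleftrightarrow> (\<exists>Q b. boundary_chart \<Omega> x0 Q b \<and> Q \<nu> = (0, 1))"

definition cond_L :: "real \<Rightarrow> ('a::euclidean_space \<times> real) set \<Rightarrow> bool" where
  "cond_L r \<Omega> \<longleftrightarrow> C1_boundary \<Omega> \<and>
     (\<forall>x0\<in>frontier \<Omega>. \<forall>y0\<in>frontier \<Omega>. \<forall>\<nu> \<mu>.
        outward_normal \<Omega> x0 \<nu> \<and> outward_normal \<Omega> y0 \<mu> \<longrightarrow> norm (\<nu> - \<mu>) \<le> dist x0 y0 / r)"

end

theory Submission
  imports Defs
begin

lemma frontier_rigid:
  fixes \<Omega> :: "('a::euclidean_space) set" and Q :: "'a \<Rightarrow> 'a"
  assumes oQ: "orthogonal_transformation Q"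
  shows "frontier ((\<lambda>x. Q x + b) ` \<Omega>) = (\<lambda>x. Q x + b) ` frontier \<Omega>"
proof -
  have linQ: "linear Q" and injQ: "inj Q"
    using oQ orthogonal_transformation_inj orthogonal_transformation_linear by auto
  have e1: "(\<lambda>x. Q x + b) ` S = (+) b ` (Q ` S)" for S
    by (auto simp: image_image add.commute)
  have "frontier (Q ` \<Omega>) = Q ` frontier \<Omega>"
    unfolding frontier_def
    using closure_injective_linear_image[OF linQ injQ] interior_injective_linear_image[OF linQ injQ]
      image_set_diff[OF injQ] by metis
  then show ?thesis unfolding e1 by (simp add: frontier_translation)
qed

lemma normal_perp:
  fixes \<Omega> :: "('a::euclidean_space \<times> real) set"
  assumes gc: "graph_chart \<Omega> \<rho> h \<phi> D\<phi>" and y: "y \<in> ball 0 \<rho>"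
    and bc: "boundary_chart \<Omega> (y, \<phi> y) Q b" and Qn: "Q \<nu> = (0,1)"
  shows "\<nu> \<bullet> (v, D\<phi> y \<bullet> v) = 0"
proof -
  from bc obtain \<rho>' h' \<psi> D\<psi> where oQ: "orthogonal_transformation Q" and Qb: "Q (y, \<phi> y) + b = 0"
     and gc': "graph_chart ((\<lambda>x. Q x + b) ` \<Omega>) \<rho>' h' \<psi> D\<psi>" unfolding boundary_chart_def by blast
  define T where "T = (\<lambda>x. Q x + b)"
  have linQ: "linear Q" using oQ orthogonal_transformation_linear by auto
  have blQ: "bounded_linear Q" using linQ linear_conv_bounded_linear by auto
  have frT: "frontier (T ` \<Omega>) = T ` frontier \<Omega>" unfolding T_def using frontier_rigid[OF oQ] .
  have rho: "\<rho> > 0" and C1: "C1_on_cball \<rho> \<phi> D\<phi>" and img: "\<phi> ` cball 0 \<rho> \<subseteq> {-h<..<h}"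
    and fr: "(ball 0 \<rho> \<times> {-h<..<h}) \<inter> frontier \<Omega> = {(x', t). x' \<in> ball 0 \<rho> \<and> -h < t \<and> t < h \<and> t = \<phi> x'}"
    using gc unfolding graph_chart_def by auto
  have rho': "\<rho>' > 0" and C1': "C1_on_cball \<rho>' \<psi> D\<psi>" and D0: "D\<psi> 0 = 0" and p0: "\<psi> 0 = 0"
    and fr': "(ball 0 \<rho>' \<times> {-h'<..<h'}) \<inter> frontier (T ` \<Omega>) = {(x', t). x' \<in> ball 0 \<rho>' \<and> -h' < t \<and> t < h' \<and> t = \<psi> x'}"
    using gc' unfolding graph_chart_def T_def by auto
  have h': "h' > 0" using gc' unfolding graph_chart_def by auto
  have dphi: "(\<phi> has_derivative (\<lambda>v. D\<phi> y \<bullet> v)) (at y)"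
  proof -
    have "(\<phi> has_derivative (\<lambda>v. D\<phi> y \<bullet> v)) (at y within cball 0 \<rho>)"
      using C1 y unfolding C1_on_cball_def by auto
    then have "(\<phi> has_derivative (\<lambda>v. D\<phi> y \<bullet> v)) (at y within ball 0 \<rho>)"
      by (rule has_derivative_subset) auto
    then show ?thesis using at_within_open[OF y open_ball] by simp
  qed
  have dpsi: "(\<psi> has_derivative (\<lambda>v. 0)) (at 0)"
  proof -
    have "(\<psi> has_derivative (\<lambda>v. D\<psi> 0 \<bullet> v)) (at 0 within cball 0 \<rho>')"
      using C1' rho' unfolding C1_on_cball_def by auto
    then have "(\<psi> has_derivative (\<lambda>v. D\<psi> 0 \<bullet> v)) (at 0 within ball 0 \<rho>')"
      by (rule has_derivative_subset) auto
    moreover have "at (0::'a) within ball 0 \<rho>' = at 0" by (rule at_within_open) (use rho' in auto)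
    ultimately show ?thesis using D0 by simp
  qed
  define \<gamma> where "\<gamma> = (\<lambda>s::real. (y + s *\<^sub>R v, \<phi> (y + s *\<^sub>R v)))"
  define z where "z = (\<lambda>s. T (\<gamma> s))"
  have z0: "z 0 = 0" unfolding z_def \<gamma>_def T_def using Qb by simp
  have dl: "((\<lambda>s::real. y + s *\<^sub>R v) has_derivative (\<lambda>s. s *\<^sub>R v)) (at 0)"
    by (auto intro!: derivative_eq_intros)
  have dcomp: "((\<lambda>s. \<phi> (y + s *\<^sub>R v)) has_derivative (\<lambda>s. D\<phi> y \<bullet> (s *\<^sub>R v))) (at 0)"
  proof -
    have "(\<phi> has_derivative (\<lambda>v. D\<phi> y \<bullet> v)) (at (y + (0::real) *\<^sub>R v))" using dphi by simp
    from has_derivative_compose[OF dl this] show ?thesis .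
  qed
  have dg: "(\<gamma> has_derivative (\<lambda>s. (s *\<^sub>R v, D\<phi> y \<bullet> (s *\<^sub>R v)))) (at 0)"
    unfolding \<gamma>_def by (rule has_derivative_Pair[OF dl dcomp])
  have dz: "(z has_derivative (\<lambda>s. Q (s *\<^sub>R v, D\<phi> y \<bullet> (s *\<^sub>R v)))) (at 0)"
    unfolding z_def T_def
    using bounded_linear.has_derivative[OF blQ dg] by (auto intro!: derivative_eq_intros)
  have d1: "((\<lambda>s. snd (z s)) has_derivative (\<lambda>s. snd (Q (s *\<^sub>R v, D\<phi> y \<bullet> (s *\<^sub>R v))))) (at 0)"
    using has_derivative_snd[OF dz] .
  have d2: "((\<lambda>s. \<psi> (fst (z s))) has_derivative (\<lambda>s. 0)) (at 0)"
  proof -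
    have "((\<lambda>s. fst (z s)) has_derivative (\<lambda>s. fst (Q (s *\<^sub>R v, D\<phi> y \<bullet> (s *\<^sub>R v))))) (at 0)"
      using has_derivative_fst[OF dz] .
    moreover have "(\<psi> has_derivative (\<lambda>v. 0)) (at (fst (z 0)))" using dpsi z0 by simp
    ultimately show ?thesis using has_derivative_compose[of "\<lambda>s. fst (z s)" _ 0 UNIV \<psi>] by (simp add: o_def)
  qed
  have contz: "isCont z 0" using has_derivative_continuous[OF dz] .
  have contl: "isCont (\<lambda>s::real. y + s *\<^sub>R v) 0" by (intro continuous_intros)
  have ev1: "\<forall>\<^sub>F s in at 0. y + s *\<^sub>R v \<in> ball 0 \<rho>"
    using contl y unfolding isCont_def by (intro topological_tendstoD) auto
  have ev2: "\<forall>\<^sub>F s in at 0. z s \<in> ball 0 \<rho>' \<times> {-h'<..<h'}"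
    using contz z0 rho' h' unfolding isCont_def
    by (intro topological_tendstoD) (auto intro!: open_Times simp: zero_prod_def)
  have ev: "\<forall>\<^sub>F s in at 0. \<psi> (fst (z s)) = snd (z s)"
    using ev1 ev2
  proof eventually_elim
    case (elim s)
    have "\<phi> (y + s *\<^sub>R v) \<in> {-h<..<h}" using img elim(1) by (intro subsetD[OF img] imageI) auto
    then have "\<gamma> s \<in> (ball 0 \<rho> \<times> {-h<..<h}) \<inter> frontier \<Omega>"
      unfolding fr using elim(1) by (simp add: \<gamma>_def)
    then have "z s \<in> T ` frontier \<Omega>" unfolding z_def by blast
    then have "z s \<in> (ball 0 \<rho>' \<times> {-h'<..<h'}) \<inter> frontier (T ` \<Omega>)"
      using elim(2) unfolding frT by blast
    then have "z s \<in> {(x', t). x' \<in> ball 0 \<rho>' \<and> -h' < t \<and> t < h' \<and> t = \<psi> x'}"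
      unfolding fr' .
    then show ?case by (cases "z s") simp
  qed
  have d3: "((\<lambda>s. snd (z s)) has_derivative (\<lambda>s. 0)) (at 0)"
    by (rule has_derivative_transform_eventually[OF d2 ev]) (use z0 p0 in auto)
  have "(\<lambda>s. snd (Q (s *\<^sub>R v, D\<phi> y \<bullet> (s *\<^sub>R v)))) = (\<lambda>s. 0)"
    using has_derivative_unique[OF d1 d3] .
  from fun_cong[OF this, of 1] have "snd (Q (v, D\<phi> y \<bullet> v)) = 0" by simp
  moreover have "\<nu> \<bullet> (v, D\<phi> y \<bullet> v) = Q \<nu> \<bullet> Q (v, D\<phi> y \<bullet> v)"
    using oQ unfolding orthogonal_transformation_def by metis
  ultimately show ?thesis using Qn by (cases "Q (v, D\<phi> y \<bullet> v)") (simp add: inner_Pair)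
qed


lemma normal_alg:
  fixes g a :: "'a::euclidean_space" and c :: real
  assumes perp: "\<And>v. (a, c) \<bullet> (v, g \<bullet> v) = 0" and n1: "norm (a, c) = 1"
  shows "(norm g)\<^sup>2 \<le> (1 + (norm g)\<^sup>2) * (norm ((0::'a, 1::real) - (a, c)))\<^sup>2"
proof -
  have "(a + c *\<^sub>R g) \<bullet> (a + c *\<^sub>R g) = 0"
    using perp[of "a + c *\<^sub>R g"] by (simp add: inner_Pair algebra_simps inner_commute)
  then have "a + c *\<^sub>R g = 0" by (simp only: inner_eq_zero_iff)
  then have a: "a = - c *\<^sub>R g" by (simp add: eq_neg_iff_add_eq_0)
  have "(norm a)\<^sup>2 + c\<^sup>2 = 1" using n1 unfolding norm_Pair
    by simp
  then have c: "c\<^sup>2 * (norm g)\<^sup>2 + c\<^sup>2 = 1" unfolding a by (simp add: power_mult_distrib)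
  have "(norm ((0::'a, 1::real) - (a, c)))\<^sup>2 = (norm a)\<^sup>2 + (1 - c)\<^sup>2"
    by (simp add: norm_Pair)
  also have "\<dots> \<ge> c\<^sup>2 * (norm g)\<^sup>2" unfolding a by (simp add: power_mult_distrib)
  finally have "(1 + (norm g)\<^sup>2) * (c\<^sup>2 * (norm g)\<^sup>2) \<le> (1 + (norm g)\<^sup>2) * (norm ((0::'a, 1::real) - (a, c)))\<^sup>2"
    by (intro mult_left_mono) auto
  moreover have "(1 + (norm g)\<^sup>2) * (c\<^sup>2 * (norm g)\<^sup>2) = (norm g)\<^sup>2" using c by algebra
  ultimately show ?thesis by simp
qed


lemma grad_L:
  fixes \<Omega> :: "('a::euclidean_space \<times> real) set"
  assumes gc: "graph_chart \<Omega> \<rho> h \<phi> D\<phi>" and L: "cond_L r \<Omega>" and r: "r > 0"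
    and y: "y \<in> ball 0 \<rho>"
  shows "(norm (D\<phi> y))\<^sup>2 \<le> (1 + (norm (D\<phi> y))\<^sup>2) * ((norm y)\<^sup>2 + (\<phi> y)\<^sup>2) / r\<^sup>2"
proof -
  have rho: "\<rho> > 0" and hp: "h > 0" and img: "\<phi> ` cball 0 \<rho> \<subseteq> {-h<..<h}" and p0: "\<phi> 0 = 0"
    and fr: "(ball 0 \<rho> \<times> {-h<..<h}) \<inter> frontier \<Omega> = {(x', t). x' \<in> ball 0 \<rho> \<and> -h < t \<and> t < h \<and> t = \<phi> x'}"
    using gc unfolding graph_chart_def by auto
  have C1b: "C1_boundary \<Omega>" and Lr: "\<forall>x0\<in>frontier \<Omega>. \<forall>y0\<in>frontier \<Omega>. \<forall>\<nu> \<mu>.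
        outward_normal \<Omega> x0 \<nu> \<and> outward_normal \<Omega> y0 \<mu> \<longrightarrow> norm (\<nu> - \<mu>) \<le> dist x0 y0 / r"
    using L unfolding cond_L_def by auto
  have "(0::'a, 0::real) \<in> (ball 0 \<rho> \<times> {-h<..<h}) \<inter> frontier \<Omega>"
    unfolding fr using rho hp p0 by auto
  then have f0: "(0::'a, 0::real) \<in> frontier \<Omega>" by blast
  have "\<phi> y \<in> {-h<..<h}" using img y by (intro subsetD[OF img] imageI) auto
  then have "(y, \<phi> y) \<in> (ball 0 \<rho> \<times> {-h<..<h}) \<inter> frontier \<Omega>"
    unfolding fr using y by auto
  then have fp: "(y, \<phi> y) \<in> frontier \<Omega>" by blast
  have bc0: "boundary_chart \<Omega> (0, 0) (\<lambda>x. x) 0"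
  proof -
    have "(\<lambda>x. x + 0) ` \<Omega> = \<Omega>" by simp
    then show ?thesis unfolding boundary_chart_def using gc by (auto simp: zero_prod_def[symmetric])
  qed
  have n0: "outward_normal \<Omega> (0, 0) (0, 1)"
    unfolding outward_normal_def using bc0 by blast
  from C1b fp obtain Q b where bc: "boundary_chart \<Omega> (y, \<phi> y) Q b"
    unfolding C1_boundary_def by blast
  then have oQ: "orthogonal_transformation Q" unfolding boundary_chart_def by auto
  obtain \<nu> where Qn: "Q \<nu> = (0, 1)" using orthogonal_transformation_surj[OF oQ] by (metis surjD)
  have n1: "outward_normal \<Omega> (y, \<phi> y) \<nu>"
    unfolding outward_normal_def using bc Qn by blast
  have le: "norm ((0, 1) - \<nu>) \<le> dist (0, 0) (y, \<phi> y) / r"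
    using Lr f0 fp n0 n1 by blast
  obtain a c where nu: "\<nu> = (a, c)" by (cases \<nu>)
  have perp: "\<And>v. (a, c) \<bullet> (v, D\<phi> y \<bullet> v) = 0"
    using normal_perp[OF gc y bc Qn] nu by simp
  have "norm \<nu> = 1" using orthogonal_transformation_norm[OF oQ, of \<nu>] Qn by simp
  then have nn: "norm (a, c) = 1" using nu by simp
  have A: "(norm (D\<phi> y))\<^sup>2 \<le> (1 + (norm (D\<phi> y))\<^sup>2) * (norm ((0::'a, 1::real) - (a, c)))\<^sup>2"
    by (rule normal_alg[OF perp nn])
  have "dist (0::'a, 0::real) (y, \<phi> y) = sqrt ((norm y)\<^sup>2 + (\<phi> y)\<^sup>2)"
    by (simp add: dist_norm norm_Pair)
  with le nu have "norm ((0::'a, 1::real) - (a, c)) \<le> sqrt ((norm y)\<^sup>2 + (\<phi> y)\<^sup>2) / r" by simp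
  then have "(norm ((0::'a, 1::real) - (a, c)))\<^sup>2 \<le> (sqrt ((norm y)\<^sup>2 + (\<phi> y)\<^sup>2) / r)\<^sup>2"
    by (intro power_mono) auto
  also have "\<dots> = ((norm y)\<^sup>2 + (\<phi> y)\<^sup>2) / r\<^sup>2" by (simp add: power_divide)
  finally have "(1 + (norm (D\<phi> y))\<^sup>2) * (norm ((0::'a, 1::real) - (a, c)))\<^sup>2
      \<le> (1 + (norm (D\<phi> y))\<^sup>2) * (((norm y)\<^sup>2 + (\<phi> y)\<^sup>2) / r\<^sup>2)"
    by (intro mult_left_mono) auto
  with A show ?thesis by simp
qed


lemma phi_deriv_at:
  assumes gc: "graph_chart \<Omega> \<rho> h \<phi> D\<phi>" and y: "y \<in> ball 0 \<rho>"
  shows "(\<phi> has_derivative (\<lambda>v. D\<phi> y \<bullet> v)) (at y)"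
proof -
  have C1: "C1_on_cball \<rho> \<phi> D\<phi>" using gc unfolding graph_chart_def by auto
  have "(\<phi> has_derivative (\<lambda>v. D\<phi> y \<bullet> v)) (at y within cball 0 \<rho>)"
    using C1 y unfolding C1_on_cball_def by auto
  then have "(\<phi> has_derivative (\<lambda>v. D\<phi> y \<bullet> v)) (at y within ball 0 \<rho>)"
    by (rule has_derivative_subset) auto
  then show ?thesis using at_within_open[OF y open_ball] by simp
qed

lemma ray_bound:
  fixes \<Omega> :: "('a::euclidean_space \<times> real) set"
  assumes gc: "graph_chart \<Omega> \<rho> h \<phi> D\<phi>" and x: "x \<in> ball 0 \<rho>"
    and B: "\<And>t. 0 \<le> t \<Longrightarrow> t \<le> 1 \<Longrightarrow> \<bar>D\<phi> (t *\<^sub>R x) \<bullet> x\<bar> \<le> A * t + B"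
  shows "\<bar>\<phi> x\<bar> \<le> A / 2 + B"
proof -
  have p0: "\<phi> 0 = 0" using gc unfolding graph_chart_def by auto
  have df: "((\<lambda>t. \<phi> (t *\<^sub>R x)) has_real_derivative (D\<phi> (t *\<^sub>R x) \<bullet> x)) (at t)"
    if "0 \<le> t" "t \<le> 1" for t
  proof -
    have "norm (t *\<^sub>R x) \<le> norm x" using that by (simp add: mult_left_le_one_le)
    then have "t *\<^sub>R x \<in> ball 0 \<rho>" using x by simp
    from phi_deriv_at[OF gc this] have d: "(\<phi> has_derivative (\<lambda>v. D\<phi> (t *\<^sub>R x) \<bullet> v)) (at (t *\<^sub>R x))" .
    have dl: "((\<lambda>t::real. t *\<^sub>R x) has_derivative (\<lambda>s. s *\<^sub>R x)) (at t)"
      by (auto intro!: derivative_eq_intros)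
    from has_derivative_compose[OF dl d]
    have "((\<lambda>t. \<phi> (t *\<^sub>R x)) has_derivative (\<lambda>s. D\<phi> (t *\<^sub>R x) \<bullet> (s *\<^sub>R x))) (at t)" .
    moreover have "(\<lambda>s. D\<phi> (t *\<^sub>R x) \<bullet> (s *\<^sub>R x)) = (*) (D\<phi> (t *\<^sub>R x) \<bullet> x)"
      by (auto simp: mult.commute)
    ultimately show ?thesis unfolding has_field_derivative_def by simp
  qed
  define G where "G = (\<lambda>t::real. A * t\<^sup>2 / 2 + B * t)"
  have dG: "(G has_real_derivative (A * t + B)) (at t)" for t
    unfolding G_def by (auto intro!: derivative_eq_intros)
  have "(\<lambda>t. \<phi> (t *\<^sub>R x) - G t) 1 \<le> (\<lambda>t. \<phi> (t *\<^sub>R x) - G t) 0"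
  proof (rule DERIV_nonpos_imp_nonincreasing[of 0 1])
    fix t :: real assume t: "0 \<le> t" "t \<le> 1"
    show "\<exists>y. ((\<lambda>t. \<phi> (t *\<^sub>R x) - G t) has_real_derivative y) (at t) \<and> y \<le> 0"
      using DERIV_diff[OF df[OF t] dG] B[OF t] by (intro exI conjI) (auto simp: abs_le_iff)
  qed simp
  moreover have "(\<lambda>t. \<phi> (t *\<^sub>R x) + G t) 0 \<le> (\<lambda>t. \<phi> (t *\<^sub>R x) + G t) 1"
  proof (rule DERIV_nonneg_imp_nondecreasing[of 0 1])
    fix t :: real assume t: "0 \<le> t" "t \<le> 1"
    show "\<exists>y. ((\<lambda>t. \<phi> (t *\<^sub>R x) + G t) has_real_derivative y) (at t) \<and> y \<ge> 0"
      using DERIV_add[OF df[OF t] dG] B[OF t] by (intro exI conjI) (auto simp: abs_le_iff)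
  qed simp
  ultimately show ?thesis using p0 by (simp add: G_def abs_le_iff)
qed


lemma sup_bdd:
  assumes gc: "graph_chart \<Omega> \<rho> h \<phi> D\<phi>" and s: "s \<le> \<rho>"
  shows "bdd_above ((\<lambda>y. (norm (D\<phi> y))\<^sup>2) ` cball 0 s)"
proof -
  have "continuous_on (cball 0 \<rho>) D\<phi>" using gc unfolding graph_chart_def C1_on_cball_def by auto
  then have "continuous_on (cball 0 s) D\<phi>" by (rule continuous_on_subset) (use s in auto)
  then have "continuous_on (cball 0 s) (\<lambda>y. (norm (D\<phi> y))\<^sup>2)" by (intro continuous_intros)
  then have "compact ((\<lambda>y. (norm (D\<phi> y))\<^sup>2) ` cball 0 s)" by (intro compact_continuous_image) auto
  then show ?thesis by (intro bounded_imp_bdd_above compact_imp_bounded)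
qed

lemma sup_upper:
  assumes gc: "graph_chart \<Omega> \<rho> h \<phi> D\<phi>" and s: "s \<le> \<rho>" and y: "y \<in> cball 0 s"
  shows "(norm (D\<phi> y))\<^sup>2 \<le> Sup ((\<lambda>y. (norm (D\<phi> y))\<^sup>2) ` cball 0 s)"
  by (rule cSup_upper) (use y sup_bdd[OF gc s] in auto)

lemma sup_mono:
  assumes gc: "graph_chart \<Omega> \<rho> h \<phi> D\<phi>" and s: "0 \<le> s" "s \<le> s'" "s' \<le> \<rho>"
  shows "Sup ((\<lambda>y. (norm (D\<phi> y))\<^sup>2) ` cball 0 s) \<le> Sup ((\<lambda>y. (norm (D\<phi> y))\<^sup>2) ` cball 0 s')"
  by (rule cSup_subset_mono) (use s sup_bdd[OF gc s(3)] in auto)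

lemma sup_nonneg:
  assumes gc: "graph_chart \<Omega> \<rho> h \<phi> D\<phi>" and s: "0 \<le> s" "s \<le> \<rho>"
  shows "0 \<le> Sup ((\<lambda>y. (norm (D\<phi> y))\<^sup>2) ` cball 0 s)"
  using sup_upper[OF gc s(2), of 0] s by (meson centre_in_cball order_trans zero_le_power2)

lemma grad_lin:
  fixes \<Omega> :: "('a::euclidean_space \<times> real) set"
  assumes gc: "graph_chart \<Omega> \<rho> h \<phi> D\<phi>" and r: "r > 0" and x: "x \<in> ball 0 \<rho>"
    and hyp: "cond_L r \<Omega> \<or> (\<forall>x\<in>cball 0 \<rho>. \<forall>y\<in>cball 0 \<rho>. norm (D\<phi> x - D\<phi> y) \<le> dist x y / r)"
    and y: "y \<in> cball 0 (norm x)"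
  shows "norm (D\<phi> y) \<le> (Sup ((\<lambda>y. (norm (D\<phi> y))\<^sup>2) ` cball 0 (norm x)) + 1) / r * norm y"
proof -
  define M where "M = Sup ((\<lambda>y. (norm (D\<phi> y))\<^sup>2) ` cball 0 (norm x))"
  have D0: "D\<phi> 0 = 0" using gc unfolding graph_chart_def by auto
  have xr: "norm x < \<rho>" using x by simp
  have M0: "0 \<le> M" unfolding M_def by (rule sup_nonneg[OF gc]) (use xr in auto)
  have ny: "norm y \<le> norm x" using y by simp
  show ?thesis
  proof (cases "cond_L r \<Omega>")
    case False
    with hyp have L: "\<forall>x\<in>cball 0 \<rho>. \<forall>y\<in>cball 0 \<rho>. norm (D\<phi> x - D\<phi> y) \<le> dist x y / r" by auto
    have "y \<in> cball 0 \<rho>" using ny xr by simp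
    moreover have "0 \<in> cball (0::'a) \<rho>" using xr norm_ge_zero[of x] by (simp del: norm_ge_zero)
    ultimately have "norm (D\<phi> y - D\<phi> 0) \<le> dist y 0 / r" using L by blast
    then have "norm (D\<phi> y) \<le> norm y / r" using D0 by simp
    also have "\<dots> \<le> (M + 1) / r * norm y" using M0 r
      by (simp add: divide_right_mono mult_le_cancel_right1 field_simps)
    finally show ?thesis unfolding M_def .
  next
    case True
    have yb: "y \<in> ball 0 \<rho>" using ny xr by simp
    define My where "My = Sup ((\<lambda>y. (norm (D\<phi> y))\<^sup>2) ` cball 0 (norm y))"
    have MyM: "My \<le> M" unfolding My_def M_def by (rule sup_mono[OF gc]) (use ny xr in auto)
    have My0: "0 \<le> My" unfolding My_def by (rule sup_nonneg[OF gc]) (use ny xr in auto)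
    have "\<bar>\<phi> y\<bar> \<le> 0 / 2 + sqrt My * norm y"
    proof (rule ray_bound[OF gc yb])
      fix t :: real assume t: "0 \<le> t" "t \<le> 1"
      have "norm (t *\<^sub>R y) \<le> norm y" using t by (simp add: mult_left_le_one_le)
      then have "(norm (D\<phi> (t *\<^sub>R y)))\<^sup>2 \<le> My" unfolding My_def
        by (intro sup_upper[OF gc]) (use ny xr in auto)
      then have "norm (D\<phi> (t *\<^sub>R y)) \<le> sqrt My" by (simp add: real_le_rsqrt)
      then have "norm (D\<phi> (t *\<^sub>R y)) * norm y \<le> sqrt My * norm y" by (simp add: mult_right_mono)
      then show "\<bar>D\<phi> (t *\<^sub>R y) \<bullet> y\<bar> \<le> 0 * t + sqrt My * norm y"
        using Cauchy_Schwarz_ineq2[of "D\<phi> (t *\<^sub>R y)" y] by simp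
    qed
    then have "(\<phi> y)\<^sup>2 \<le> (sqrt My * norm y)\<^sup>2"
      by (metis abs_ge_zero add_0 div_0 power2_abs power_mono)
    also have "\<dots> = My * (norm y)\<^sup>2" using My0 by (simp add: power_mult_distrib)
    also have "\<dots> \<le> M * (norm y)\<^sup>2" using MyM by (simp add: mult_right_mono)
    finally have phy: "(\<phi> y)\<^sup>2 \<le> M * (norm y)\<^sup>2" .
    have g: "(norm (D\<phi> y))\<^sup>2 \<le> M" unfolding M_def by (rule sup_upper[OF gc _ y]) (use xr in auto)
    have "(norm (D\<phi> y))\<^sup>2 \<le> (1 + (norm (D\<phi> y))\<^sup>2) * ((norm y)\<^sup>2 + (\<phi> y)\<^sup>2) / r\<^sup>2"
      by (rule grad_L[OF gc True r yb])
    also have "\<dots> \<le> (1 + M) * ((1 + M) * (norm y)\<^sup>2) / r\<^sup>2"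
      using g phy M0 by (intro divide_right_mono mult_mono) (auto simp: algebra_simps)
    also have "\<dots> = ((M + 1) / r * norm y)\<^sup>2" by (simp add: power_divide power_mult_distrib power2_eq_square add.commute)
    finally have "(norm (D\<phi> y))\<^sup>2 \<le> ((M + 1) / r * norm y)\<^sup>2" .
    then have "norm (D\<phi> y) \<le> (M + 1) / r * norm y"
      by (rule power2_le_imp_le) (use M0 r in auto)
    then show ?thesis unfolding M_def .
  qed
qed


lemma phi_bound:
  fixes \<Omega> :: "('a::euclidean_space \<times> real) set"
  assumes gc: "graph_chart \<Omega> \<rho> h \<phi> D\<phi>" and r: "r > 0" and x: "x \<in> ball 0 \<rho>"
    and hyp: "cond_L r \<Omega> \<or> (\<forall>x\<in>cball 0 \<rho>. \<forall>y\<in>cball 0 \<rho>. norm (D\<phi> x - D\<phi> y) \<le> dist x y / r)"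
  shows "\<bar>\<phi> x\<bar> \<le> (Sup ((\<lambda>y. (norm (D\<phi> y))\<^sup>2) ` cball 0 (norm x)) + 1) / (2 * r) * (norm x)\<^sup>2"
proof -
  define M where "M = Sup ((\<lambda>y. (norm (D\<phi> y))\<^sup>2) ` cball 0 (norm x))"
  have "\<bar>\<phi> x\<bar> \<le> ((M + 1) / r * (norm x)\<^sup>2) / 2 + 0"
  proof (rule ray_bound[OF gc x])
    fix t :: real assume t: "0 \<le> t" "t \<le> 1"
    have "norm (t *\<^sub>R x) \<le> norm x" using t by (simp add: mult_left_le_one_le)
    then have "norm (D\<phi> (t *\<^sub>R x)) \<le> (M + 1) / r * norm (t *\<^sub>R x)"
      unfolding M_def by (intro grad_lin[OF gc r x hyp]) auto
    then have "norm (D\<phi> (t *\<^sub>R x)) * norm x \<le> (M + 1) / r * norm (t *\<^sub>R x) * norm x"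
      by (rule mult_right_mono) simp
    also have "\<dots> = (M + 1) / r * (norm x)\<^sup>2 * t" using t by (simp add: power2_eq_square)
    finally show "\<bar>D\<phi> (t *\<^sub>R x) \<bullet> x\<bar> \<le> (M + 1) / r * (norm x)\<^sup>2 * t + 0"
      using Cauchy_Schwarz_ineq2[of "D\<phi> (t *\<^sub>R x)" x] by simp
  qed
  then show ?thesis unfolding M_def by simp
qed

theorem lemma4p1:
  fixes \<Omega> :: "('a::euclidean_space \<times> real) set"
    and \<phi> :: "'a \<Rightarrow> real" and D\<phi> :: "'a \<Rightarrow> 'a"
    and \<rho> h r :: real
  assumes "open \<Omega>" and "connected \<Omega>" and "(0, 0) \<in> frontier \<Omega>"
    and "graph_chart \<Omega> \<rho> h \<phi> D\<phi>"
    and "r > 0"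
    and "cond_L r \<Omega> \<or> (\<forall>x\<in>cball 0 \<rho>. \<forall>y\<in>cball 0 \<rho>. norm (D\<phi> x - D\<phi> y) \<le> dist x y / r)"
  shows "(\<forall>x'\<in>ball 0 \<rho>.
           \<bar>\<phi> x'\<bar> \<le> (Sup ((\<lambda>y. (norm (D\<phi> y))\<^sup>2) ` cball 0 (norm x')) + 1) / (2 * r) * (norm x')\<^sup>2)
       \<and> (let \<delta>0 = min (r / (Sup ((\<lambda>y. (norm (D\<phi> y))\<^sup>2) ` cball 0 \<rho>) + 1)) (min \<rho> (h / 2))
          in ball (0, - \<delta>0) \<delta>0 \<subseteq> \<Omega> \<and> ball (0, \<delta>0) \<delta>0 \<subseteq> - closure \<Omega>)"
proof -
  note gc = assms(4) and r = assms(5) and hyp = assms(6)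
  have A: "\<forall>x'\<in>ball 0 \<rho>.
           \<bar>\<phi> x'\<bar> \<le> (Sup ((\<lambda>y. (norm (D\<phi> y))\<^sup>2) ` cball 0 (norm x')) + 1) / (2 * r) * (norm x')\<^sup>2"
    using phi_bound[OF gc r _ hyp] by blast
  have rho: "\<rho> > 0" and hp: "h > 0"
    and om: "(ball 0 \<rho> \<times> {-h<..<h}) \<inter> \<Omega> = {(x', t). x' \<in> ball 0 \<rho> \<and> -h < t \<and> t < h \<and> t < \<phi> x'}"
    and fr: "(ball 0 \<rho> \<times> {-h<..<h}) \<inter> frontier \<Omega> = {(x', t). x' \<in> ball 0 \<rho> \<and> -h < t \<and> t < h \<and> t = \<phi> x'}"
    using gc unfolding graph_chart_def by auto
  define S where "S = Sup ((\<lambda>y. (norm (D\<phi> y))\<^sup>2) ` cball 0 \<rho>)"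
  have S0: "0 \<le> S" unfolding S_def by (rule sup_nonneg[OF gc]) (use rho in auto)
  define \<delta> where "\<delta> = min (r / (S + 1)) (min \<rho> (h / 2))"
  have d0: "\<delta> > 0" unfolding \<delta>_def using r S0 rho hp by auto
  have dr: "\<delta> \<le> \<rho>" "\<delta> \<le> h / 2" "\<delta> \<le> r / (S + 1)" unfolding \<delta>_def
    by (meson min.cobounded1 min.cobounded2 order_trans)+
  have key: "\<bar>\<phi> a\<bar> \<le> (norm a)\<^sup>2 / (2 * \<delta>)" if a: "a \<in> ball 0 \<rho>" for a :: 'a
  proof -
    have "\<bar>\<phi> a\<bar> \<le> (Sup ((\<lambda>y. (norm (D\<phi> y))\<^sup>2) ` cball 0 (norm a)) + 1) / (2 * r) * (norm a)\<^sup>2"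
      using A a by blast
    also have "\<dots> \<le> (S + 1) / (2 * r) * (norm a)\<^sup>2"
      unfolding S_def using sup_mono[OF gc, of "norm a" \<rho>] a r
      by (intro mult_right_mono divide_right_mono) auto
    also have "(S + 1) / (2 * r) \<le> 1 / (2 * \<delta>)"
    proof -
      have "\<delta> * (S + 1) \<le> r" using dr(3) S0 by (simp add: field_simps)
      then show ?thesis using d0 r S0 by (simp add: field_simps)
    qed
    then have "(S + 1) / (2 * r) * (norm a)\<^sup>2 \<le> 1 / (2 * \<delta>) * (norm a)\<^sup>2"
      by (intro mult_right_mono) auto
    finally show ?thesis by simp
  qed
  have B1: "ball (0::'a, - \<delta>) \<delta> \<subseteq> \<Omega>"
  proof
    fix p :: "'a \<times> real" assume p: "p \<in> ball (0, - \<delta>) \<delta>"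
    obtain a t where pe: "p = (a, t)" by (cases p)
    have "sqrt ((norm a)\<^sup>2 + (t + \<delta>)\<^sup>2) < \<delta>"
    proof -
      have e: "(- \<delta> - t)\<^sup>2 = (t + \<delta>)\<^sup>2" by (simp add: power2_eq_square algebra_simps)
      show ?thesis using p pe by (simp add: dist_norm norm_Pair e)
    qed
    then have q: "(norm a)\<^sup>2 + (t + \<delta>)\<^sup>2 < \<delta>\<^sup>2" using d0
      by (metis abs_of_pos real_sqrt_abs real_sqrt_less_iff)
    have na: "norm a < \<delta>"
    proof -
      have "(norm a)\<^sup>2 < \<delta>\<^sup>2" using q by (smt (verit) zero_le_power2)
      then show ?thesis using d0 by (simp add: power_less_imp_less_base)
    qed
    then have aB: "a \<in> ball 0 \<rho>" using dr by simp
    have t1: "t < - (norm a)\<^sup>2 / (2 * \<delta>)"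
    proof -
      have "(norm a)\<^sup>2 + t\<^sup>2 + 2 * t * \<delta> < 0" using q by (simp add: power2_eq_square algebra_simps)
      then have "(norm a)\<^sup>2 < - 2 * t * \<delta>" using zero_le_power2[of t] by linarith
      then show ?thesis using d0 by (simp add: field_simps)
    qed
    have "- (norm a)\<^sup>2 / (2 * \<delta>) \<le> \<phi> a" using key[OF aB] by (simp add: abs_le_iff)
    with t1 have tp: "t < \<phi> a" by simp
    have "- (norm a)\<^sup>2 / (2 * \<delta>) \<le> 0" using d0 by simp
    with t1 have "t < 0" by simp
    moreover have "- h < t"
    proof -
      have "(t + \<delta>)\<^sup>2 < \<delta>\<^sup>2" using q by (smt (verit) zero_le_power2)
      then have "\<bar>t + \<delta>\<bar> < \<delta>" using d0 by (metis abs_of_pos power2_abs power_less_imp_less_base abs_ge_zero)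
      then show ?thesis using dr by linarith
    qed
    ultimately have "p \<in> {(x', t). x' \<in> ball 0 \<rho> \<and> -h < t \<and> t < h \<and> t < \<phi> x'}"
      using pe aB tp hp by auto
    then show "p \<in> \<Omega>" unfolding om[symmetric] by blast
  qed
  have B2: "ball (0::'a, \<delta>) \<delta> \<subseteq> - closure \<Omega>"
  proof
    fix p :: "'a \<times> real" assume p: "p \<in> ball (0, \<delta>) \<delta>"
    obtain a t where pe: "p = (a, t)" by (cases p)
    have "sqrt ((norm a)\<^sup>2 + (t - \<delta>)\<^sup>2) < \<delta>"
    proof -
      have e: "(\<delta> - t)\<^sup>2 = (t - \<delta>)\<^sup>2" by (simp add: power2_eq_square algebra_simps)
      show ?thesis using p pe by (simp add: dist_norm norm_Pair e)
    qed
    then have q: "(norm a)\<^sup>2 + (t - \<delta>)\<^sup>2 < \<delta>\<^sup>2" using d0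
      by (metis abs_of_pos real_sqrt_abs real_sqrt_less_iff)
    have na: "norm a < \<delta>"
    proof -
      have "(norm a)\<^sup>2 < \<delta>\<^sup>2" using q by (smt (verit) zero_le_power2)
      then show ?thesis using d0 by (simp add: power_less_imp_less_base)
    qed
    then have aB: "a \<in> ball 0 \<rho>" using dr by simp
    have t1: "t > (norm a)\<^sup>2 / (2 * \<delta>)"
    proof -
      have "(norm a)\<^sup>2 + t\<^sup>2 - 2 * t * \<delta> < 0" using q by (simp add: power2_eq_square algebra_simps)
      then have "(norm a)\<^sup>2 < 2 * t * \<delta>" using zero_le_power2[of t] by linarith
      then show ?thesis using d0 by (simp add: field_simps)
    qed
    have "\<phi> a \<le> (norm a)\<^sup>2 / (2 * \<delta>)" using key[OF aB] by (simp add: abs_le_iff)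
    with t1 have tp: "\<phi> a < t" by simp
    have "0 \<le> (norm a)\<^sup>2 / (2 * \<delta>)" using d0 by simp
    with t1 have "0 < t" by simp
    moreover have "t < h"
    proof -
      have "(t - \<delta>)\<^sup>2 < \<delta>\<^sup>2" using q by (smt (verit) zero_le_power2)
      then have "\<bar>t - \<delta>\<bar> < \<delta>" using d0 by (metis abs_of_pos power2_abs power_less_imp_less_base abs_ge_zero)
      then show ?thesis using dr by linarith
    qed
    ultimately have cyl: "p \<in> ball 0 \<rho> \<times> {-h<..<h}" using pe aB hp by auto
    have "p \<notin> \<Omega>"
    proof
      assume "p \<in> \<Omega>"
      then have "p \<in> (ball 0 \<rho> \<times> {-h<..<h}) \<inter> \<Omega>" using cyl by blast
      then show False unfolding om using pe tp by auto
    qed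
    moreover have "p \<notin> frontier \<Omega>"
    proof
      assume "p \<in> frontier \<Omega>"
      then have "p \<in> (ball 0 \<rho> \<times> {-h<..<h}) \<inter> frontier \<Omega>" using cyl by blast
      then show False unfolding fr using pe tp by auto
    qed
    ultimately show "p \<in> - closure \<Omega>" using closure_Un_frontier[of \<Omega>] by auto
  qed
  show ?thesis using A B1 B2 unfolding Let_def \<delta>_def S_def by blast
qed

end
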